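(* Let $R$ be a $*$-reducing ring and let $p,q\in R$ be projections. Then the following are equivalent: (1) $pq-qp$ is MP invertible; (2) $pq$ and $p-q$ are both MP invertible.
   Context: $R$ is an associative ring with identity $1$ and an involution $a\mapsto a^*$ (satisfying $(a^* )^*=a$, $(a+b)^*=a^*+b^*$, $(ab)^*=b^*a^*$). $R$ is $*$-reducing if $a^*a=0$ implies $a=0$ for all $a\in R$. An element $a$ is MP invertible if there is $b$ with $aba=a$, $bab=b$, $(ab)^*=ab$, $(ba)^*=ba$. A projection is an element $p$ with $p^2=p=p^*$. *)

theory Defs
  imports Main
begin

class involution_ring = ring_1 +
  fixes invol :: "'a \<Rightarrow> 'a"
  assumes invol_invol: "invol (invol a) = a"
    and invol_add: "invol (a + b) = invol a + invol b"
    and invol_mult: "invol (a * b) = invol b * invol a"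

definition star_reducing :: "'a::involution_ring itself \<Rightarrow> bool" where
  "star_reducing _ \<longleftrightarrow> (\<forall>a::'a. invol a * a = 0 \<longrightarrow> a = 0)"

definition MP_invertible :: "'a::involution_ring \<Rightarrow> bool" where
  "MP_invertible a \<longleftrightarrow> (\<exists>b. a * b * a = a \<and> b * a * b = b \<and>
      invol (a * b) = a * b \<and> invol (b * a) = b * a)"

definition projection :: "'a::involution_ring \<Rightarrow> bool" where
  "projection p \<longleftrightarrow> p * p = p \<and> invol p = p"

end

theory Submission imports Defs begin

lemma invol_zero: "invol (0::'a::involution_ring) = 0"
proof -
  have "invol (0::'a) + invol 0 = invol 0" using invol_add[of "0::'a" 0] by simp
  then show ?thesis by simp
qed

lemma invol_minus: "invol (- (a::'a::involution_ring)) = - invol a"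
proof -
  have "invol a + invol (- a) = 0" using invol_add[of a "-a"] by (simp add: invol_zero)
  then show ?thesis by (simp add: add_eq_0_iff)
qed

lemma invol_diff: "invol ((a::'a::involution_ring) - b) = invol a - invol b"
proof -
  have "invol (a - b) = invol (a + - b)" by (simp only: diff_conv_add_uminus)
  also have "\<dots> = invol a + - invol b" by (simp only: invol_add invol_minus)
  finally show ?thesis by simp
qed

lemma invol_one: "invol (1::'a::involution_ring) = 1"
proof -
  have "invol (1::'a) = invol 1 * invol (invol 1)" by (simp only: invol_invol mult_1_right)
  also have "\<dots> = invol (invol 1 * 1)" by (simp only: invol_mult)
  also have "\<dots> = 1" by (simp only: invol_invol mult_1_right)
  finally show ?thesis .
qed

lemma mp_crit:
  fixes a :: "'a::involution_ring"
  assumes A: "a * invol a * x = a" and B: "y * invol a * a = a"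
  shows "MP_invertible a"
proof -
  have A': "invol x * a * invol a = invol a"
    using arg_cong[OF A, of invol] by (simp only: invol_mult invol_invol mult.assoc)
  have B': "invol a * a * invol y = invol a"
    using arg_cong[OF B, of invol] by (simp only: invol_mult invol_invol mult.assoc)
  have e: "invol x * a = invol a * x"
  proof -
    have "invol x * a = invol x * (a * invol a * x)" by (simp only: A)
    also have "\<dots> = (invol x * a * invol a) * x" by (simp only: mult.assoc)
    also have "\<dots> = invol a * x" by (simp only: A')
    finally show ?thesis .
  qed
  have f: "a * invol y = y * invol a"
  proof -
    have "a * invol y = (y * invol a * a) * invol y" by (simp only: B)
    also have "\<dots> = y * (invol a * a * invol y)" by (simp only: mult.assoc)
    also have "\<dots> = y * invol a" by (simp only: B')
    finally show ?thesis .
  qed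
  define b where "b = invol a * x * invol y"
  have ab: "a * b = a * invol y"
  proof -
    have "a * b = (a * invol a * x) * invol y" unfolding b_def by (simp only: mult.assoc)
    then show ?thesis by (simp only: A)
  qed
  have b2: "b = invol x * a * invol y" unfolding b_def by (simp only: e)
  have aya: "a * invol y * a = a" by (simp only: f B)
  have ba: "b * a = invol x * a"
  proof -
    have "b * a = invol x * (a * invol y * a)" unfolding b2 by (simp only: mult.assoc)
    then show ?thesis by (simp only: aya)
  qed
  show ?thesis unfolding MP_invertible_def
  proof (intro exI conjI)
    show "a * b * a = a" by (simp only: ab aya)
    show "b * a * b = b"
    proof -
      have "b * a * b = invol x * (a * b)" by (simp only: ba mult.assoc)
      also have "\<dots> = invol x * a * invol y" by (simp only: ab mult.assoc)
      finally show ?thesis by (simp only: b2)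
    qed
    show "invol (a * b) = a * b"
    proof -
      have "invol (a * b) = invol (y * invol a)" by (simp only: ab f)
      also have "\<dots> = a * invol y" by (simp only: invol_mult invol_invol)
      finally show ?thesis by (simp only: ab)
    qed
    show "invol (b * a) = b * a"
    proof -
      have "invol (b * a) = invol (invol a * x)" by (simp only: ba e)
      also have "\<dots> = invol x * a" by (simp only: invol_mult invol_invol)
      finally show ?thesis by (simp only: ba)
    qed
  qed
qed

lemma mp_conv:
  fixes a :: "'a::involution_ring"
  assumes "MP_invertible a"
  shows "\<exists>x. a * invol a * x = a" "\<exists>y. y * invol a * a = a"
proof -
  obtain b where b: "a * b * a = a" "invol (a * b) = a * b" "invol (b * a) = b * a"
    using assms unfolding MP_invertible_def by blast
  have "a * invol a * invol b = a * invol (b * a)" by (simp only: invol_mult mult.assoc)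
  also have "\<dots> = a" by (simp only: b(3) b(1) mult.assoc[symmetric])
  finally show "\<exists>x. a * invol a * x = a" by blast
  have "invol b * invol a * a = invol (a * b) * a" by (simp only: invol_mult)
  also have "\<dots> = a" by (simp only: b(2) b(1))
  finally show "\<exists>y. y * invol a * a = a" by blast
qed


theorem theorem2p13:
  fixes p q :: "'a::involution_ring"
  assumes "star_reducing TYPE('a)"
    and "projection p" and "projection q"
  shows "MP_invertible (p * q - q * p) \<longleftrightarrow> (MP_invertible (p * q) \<and> MP_invertible (p - q))"
proof -
  have pp: "p * p = p" "invol p = p" using assms(2) unfolding projection_def by auto
  have qq: "q * q = q" "invol q = q" using assms(3) unfolding projection_def by auto
  have pp': "p * (p * z) = p * z" for z using pp(1) by (metis mult.assoc)
  have qq': "q * (q * z) = q * z" for z using qq(1) by (metis mult.assoc)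
  define a where "a = p - q"
  define s where "s = p + q - 1"
  define t where "t = a * a"
  define u where "u = s * s"
  define c where "c = p * q - q * p"
  note defs = a_def s_def t_def u_def c_def
  have tu1: "t + u = 1" unfolding defs by (simp add: algebra_simps pp pp' qq qq')
  have cas: "c = a * s" unfolding defs by (simp add: algebra_simps pp pp' qq qq')
  have csa: "c = - (s * a)" unfolding defs by (simp add: algebra_simps pp pp' qq qq')
  have tp: "t * p = p * t" unfolding defs by (simp add: algebra_simps pp pp' qq qq')
  have tq: "t * q = q * t" unfolding defs by (simp add: algebra_simps pp pp' qq qq')
  have up: "u * p = p * u" unfolding defs by (simp add: algebra_simps pp pp' qq qq')
  have uq: "u * q = q * u" unfolding defs by (simp add: algebra_simps pp pp' qq qq')
  have ts: "t * s = s * t" unfolding defs by (simp add: algebra_simps pp pp' qq qq')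
  have ta: "t * a = a * t" unfolding defs by (simp add: algebra_simps pp pp' qq qq')
  have ua: "u * a = a * u" unfolding defs by (simp add: algebra_simps pp pp' qq qq')
  have us: "u * s = s * u" unfolding defs by (simp add: algebra_simps pp pp' qq qq')
  have tuc: "t * u = u * t" unfolding defs by (simp add: algebra_simps pp pp' qq qq')
  have pqp: "p * q * (q * p) = p * u" unfolding defs by (simp add: algebra_simps pp pp' qq qq')
  have qpq: "q * p * (p * q) = q * u" unfolding defs by (simp add: algebra_simps pp pp' qq qq')
  have ps: "p * s = p * q" unfolding defs by (simp add: algebra_simps pp pp' qq qq')
  have sq: "s * q = p * q" unfolding defs by (simp add: algebra_simps pp pp' qq qq')
  have ia: "invol a = a" unfolding a_def by (simp add: invol_diff pp qq)
  have ipq: "invol (p * q) = q * p" by (simp add: invol_mult pp qq)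
  have cc1: "c * invol c = t * u" unfolding defs
    by (simp add: algebra_simps pp pp' qq qq' invol_diff invol_mult)
  have cc2: "invol c * c = t * u" unfolding defs
    by (simp add: algebra_simps pp pp' qq qq' invol_diff invol_mult)
  have cpq: "p * q - q * p = c" by (simp add: c_def)
  have ca_eq: "c * a = - (s * t)" using csa t_def by (simp add: mult.assoc)
  have cs_eq: "c * s = a * u" using cas u_def by (simp add: mult.assoc)
  show ?thesis unfolding cpq
  proof
    assume "MP_invertible c"
    from mp_conv[OF this] obtain x y where
      x0: "c * invol c * x = c" and y0: "y * invol c * c = c" by blast
    have cx: "t * (u * x) = c" using x0 by (simp add: cc1 mult.assoc)
    have cy: "y * (t * u) = c" using y0 by (simp add: cc2 mult.assoc)
    have A1: "a * invol a * (a + u * (x * s)) = a"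
    proof -
      have "a * invol a * (a + u * (x * s)) = t * a + (t * (u * x)) * s"
        by (simp add: ia t_def algebra_simps)
      also have "\<dots> = a * (t + u)" by (simp only: cx cs_eq ta distrib_left)
      finally show ?thesis by (simp add: tu1)
    qed
    have A2: "(a + y * (s * u)) * invol a * a = a"
    proof -
      have "(a + y * (s * u)) * invol a * a = a * t + y * (s * u * t)"
        by (simp add: ia t_def algebra_simps)
      also have "s * u * t = t * u * s" by (simp add: mult.assoc us[symmetric] tuc ts[symmetric])
      also have "a * t + y * (t * u * s) = a * t + (y * (t * u)) * s" by (simp only: mult.assoc)
      also have "\<dots> = a * (t + u)" by (simp only: cy cs_eq distrib_left)
      finally show ?thesis by (simp add: tu1)
    qed
    have P1: "p * q * invol (p * q) * (s - t * (x * a)) = p * q"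
    proof -
      have "p * q * invol (p * q) * (s - t * (x * a)) = p * u * (s - t * (x * a))"
        by (simp only: ipq pqp)
      also have "\<dots> = p * (u * s) - p * ((u * t) * x * a)"
        by (simp add: algebra_simps)
      also have "\<dots> = p * s * u - p * (t * (u * x)) * a"
        by (simp only: us tuc mult.assoc[symmetric])
      also have "\<dots> = p * s * u - p * (c * a)" by (simp only: cx mult.assoc)
      also have "\<dots> = p * s * u + p * (s * t)" by (simp add: ca_eq)
      also have "\<dots> = p * s * (u + t)" by (simp add: algebra_simps)
      finally show ?thesis by (simp add: tu1 add.commute ps)
    qed
    have P2: "(s - y * (a * t)) * invol (p * q) * (p * q) = p * q"
    proof -
      have "(s - y * (a * t)) * invol (p * q) * (p * q) = (s - y * (a * t)) * (q * u)"
        by (metis ipq qpq mult.assoc)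
      also have "\<dots> = s * q * u - y * (a * (t * (q * u)))"
        by (simp add: algebra_simps)
      also have "a * (t * (q * u)) = (t * u) * (a * q)"
      proof -
        have "a * (t * (q * u)) = (a * t) * (u * q)" by (simp only: uq mult.assoc)
        also have "\<dots> = (t * a) * (u * q)" by (simp only: ta)
        also have "\<dots> = t * ((a * u) * q)" by (simp only: mult.assoc)
        also have "\<dots> = t * ((u * a) * q)" by (simp only: ua)
        also have "\<dots> = (t * u) * (a * q)" by (simp only: mult.assoc)
        finally show ?thesis .
      qed
      also have "y * ((t * u) * (a * q)) = (y * (t * u)) * (a * q)" by (simp only: mult.assoc)
      also have "\<dots> = c * a * q" by (simp only: cy mult.assoc)
      also have "c * a * q = - (s * q * t)" by (simp add: ca_eq mult.assoc tq)
      also have "s * q * u - - (s * q * t) = s * q * (u + t)" by (simp add: algebra_simps)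
      finally show ?thesis by (simp add: tu1 add.commute sq)
    qed
    show "MP_invertible (p * q) \<and> MP_invertible (p - q)"
      using mp_crit[OF A1 A2] mp_crit[OF P1 P2] by (simp add: a_def)
  next
    assume H0: "MP_invertible (p * q) \<and> MP_invertible (p - q)"
    then have H: "MP_invertible (p * q) \<and> MP_invertible a" by (simp add: a_def)
    from mp_conv[of a] H obtain x1 y1 where
      x1: "a * invol a * x1 = a" and y1: "y1 * invol a * a = a" by blast
    from mp_conv[of "p * q"] H obtain x2 y2 where
      x2: "p * q * invol (p * q) * x2 = p * q" and y2: "y2 * invol (p * q) * (p * q) = p * q" by blast
    have x2': "p * (u * x2) = p * q" using x2 unfolding ipq pqp by (simp only: mult.assoc)
    have y2': "y2 * (q * u) = p * q" using y2 unfolding ipq mult.assoc[of y2] qpq .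
    have iu: "invol u = u" unfolding u_def s_def
      by (simp add: invol_mult invol_add invol_diff invol_one pp qq)
    have C1: "u * (p * x2 - q * invol y2) = c"
    proof -
      have "invol (y2 * (q * u)) = (u * q) * invol y2"
        by (simp only: invol_mult qq iu)
      then have "u * (q * invol y2) = invol (y2 * (q * u))"
        by (simp only: mult.assoc)
      also have "\<dots> = q * p" by (simp add: y2' ipq)
      finally have 1: "u * (q * invol y2) = q * p" .
      have 2: "u * (p * x2) = p * q" using x2' by (simp add: mult.assoc[symmetric] up)
      show ?thesis by (simp add: right_diff_distrib 1 2 c_def)
    qed
    have C2: "(y2 * q - invol x2 * p) * u = c"
    proof -
      have "invol (p * (u * x2)) = invol x2 * (u * p)"
        by (simp only: invol_mult pp iu mult.assoc)
      then have "invol x2 * p * u = invol (p * (u * x2))"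
        by (simp only: up mult.assoc)
      also have "\<dots> = q * p" by (simp add: x2' ipq)
      finally have 1: "invol x2 * p * u = q * p" .
      have 2: "y2 * q * u = p * q" using y2' by (simp add: mult.assoc)
      show ?thesis by (simp add: left_diff_distrib 1 2 c_def)
    qed
    have C3: "t * (x1 * s) = c"
      using x1 by (simp add: cas ia t_def mult.assoc[symmetric])
    have C4: "(y1 * s) * t = c"
    proof -
      have "(y1 * s) * t = (y1 * t) * s" by (simp add: mult.assoc ts)
      moreover have "y1 * t = a" using y1 unfolding ia t_def by (simp only: mult.assoc)
      ultimately show ?thesis by (simp add: cas)
    qed
    have D1: "c * invol c * ((p * x2 - q * invol y2) + x1 * s) = c"
    proof -
      have "c * invol c * ((p * x2 - q * invol y2) + x1 * s)
          = t * (u * (p * x2 - q * invol y2)) + u * (t * (x1 * s))"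
        by (simp add: cc1 distrib_left mult.assoc[symmetric] tuc)
      also have "\<dots> = (t + u) * c" by (simp only: C1 C3 distrib_right)
      finally show ?thesis by (simp add: tu1)
    qed
    have D2: "((y2 * q - invol x2 * p) + y1 * s) * invol c * c = c"
    proof -
      have "((y2 * q - invol x2 * p) + y1 * s) * invol c * c
          = ((y2 * q - invol x2 * p) * u) * t + ((y1 * s) * t) * u"
        by (simp add: cc2 distrib_right mult.assoc tuc)
      also have "\<dots> = c * (t + u)" by (simp only: C2 C4 distrib_left)
      finally show ?thesis by (simp add: tu1)
    qed
    show "MP_invertible c" by (rule mp_crit[OF D1 D2])
  qed
qed

end
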